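(* Let $f(x,y) = \frac{xy}{x+y+1}$ for $x,y\ge0$. Let $a,b$ be nonnegative random variables, $\rho>0$ and $r\in\mathbb R$. Then $$\Pr\bigl(f(\rho a,\rho b)\le\rho^{2r}\bigr) \le \Pr\Bigl(\min(a,b)\le \rho^{2r-1}+\rho^{r-1}\sqrt{1+\rho^{2r}}\Bigr).$$ *)

theory Defs
  imports "HOL-Probability.Probability"
begin

definition fxy :: "real \<Rightarrow> real \<Rightarrow> real" where
  "fxy x y = x * y / (x + y + 1)"

end

theory Submission imports Defs begin
lemma fmono1: "0 \<le> u \<Longrightarrow> u \<le> x \<Longrightarrow> 0 \<le> y \<Longrightarrow> fxy u y \<le> fxy x y"
proof -
  assume h: "0 \<le> u" "u \<le> x" "0 \<le> y"
  have d: "x*y*(u+y+1) - u*y*(x+y+1) = y*(y+1)*(x-u)" by (simp add: algebra_simps)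
  have "y*(y+1)*(x-u) \<ge> 0" using h by simp
  hence "u*y*(x+y+1) \<le> x*y*(u+y+1)" using d by linarith
  thus ?thesis unfolding fxy_def using h by (simp add: divide_simps)
qed
lemma fsym: "fxy x y = fxy y x" unfolding fxy_def by (simp add: ac_simps)
lemma key:
  fixes x y s q u :: real
  assumes "0 \<le> u" "u \<le> x" "u \<le> y" "q > 0" "s = q^2" "u > s + q * sqrt (1 + s)"
  shows "fxy x y > s"
proof -
  have w: "(s + q * sqrt (1+s))^2 = 2 * s * (s + q * sqrt (1+s)) + s"
    using assms(4,5) by (simp add: power2_eq_square algebra_simps)
  let ?w = "s + q * sqrt (1+s)"
  have s0: "s \<ge> 0" using assms by simp
  have qs: "q * sqrt (1+s) > 0" using assms(4) s0 by (intro mult_pos_pos) auto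
  have "u^2 - 2 * s * u - s > 0"
  proof -
    have e: "u^2 - 2 * s * u - s - (?w^2 - 2 * s * ?w - s) = (u - ?w) * (u + ?w - 2 * s)"
      by (simp add: power2_eq_square algebra_simps)
    have p1: "u + ?w - 2 * s > 0" using assms(6) qs s0 by linarith
    have p2: "u - ?w > 0" using assms(6) by linarith
    have "(u - ?w) * (u + ?w - 2 * s) > 0" using p1 p2 by simp
    thus ?thesis using e w by linarith
  qed
  hence lt: "s * (2*u+1) < u * u" by (simp add: power2_eq_square algebra_simps)
  have "fxy u u > s" unfolding fxy_def using assms(1) lt
    by (simp add: pos_less_divide_eq)
  also have "fxy u u \<le> fxy u y" using fmono1[of u y u] fsym assms by (metis order_trans)
  also have "\<dots> \<le> fxy x y" using fmono1 assms by auto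
  finally show ?thesis .
qed

lemma pointwise:
  fixes a b \<rho> r :: real
  assumes "a \<ge> 0" "b \<ge> 0" "\<rho> > 0" "fxy (\<rho> * a) (\<rho> * b) \<le> \<rho> powr (2 * r)"
  shows "min a b \<le> \<rho> powr (2 * r - 1) + \<rho> powr (r - 1) * sqrt (1 + \<rho> powr (2 * r))"
proof (rule ccontr)
  assume h: "\<not> ?thesis"
  define q where "q = \<rho> powr r"
  define s where "s = \<rho> powr (2*r)"
  have q: "q > 0" using assms unfolding q_def by simp
  have s: "s = q^2" unfolding s_def q_def using assms
    by (simp add: powr_realpow[symmetric] powr_powr mult.commute)
  have e1: "\<rho> powr (2 * r - 1) = s / \<rho>" unfolding s_def using assms by (simp add: powr_diff)
  have e2: "\<rho> powr (r - 1) = q / \<rho>" unfolding q_def using assms by (simp add: powr_diff)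
  have "min a b * \<rho> > s + q * sqrt (1 + s)"
    using h assms(3) unfolding e1 e2 s_def[symmetric]
    by (simp add: field_simps)
  hence "\<rho> * min a b > s + q * sqrt (1 + s)" by (simp add: mult.commute)
  hence "fxy (\<rho> * a) (\<rho> * b) > s"
    by (intro key[of "\<rho> * min a b" _ _ q]) (use assms q s in \<open>auto simp: min_def\<close>)
  thus False using assms(4) s_def by simp
qed

theorem lemma4:
  fixes M :: "'s measure" and a b :: "'s \<Rightarrow> real" and \<rho> r :: real
  assumes "prob_space M"
    and "a \<in> borel_measurable M" and "b \<in> borel_measurable M"
    and "\<And>\<omega>. \<omega> \<in> space M \<Longrightarrow> a \<omega> \<ge> 0"
    and "\<And>\<omega>. \<omega> \<in> space M \<Longrightarrow> b \<omega> \<ge> 0"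
    and "\<rho> > 0"
  shows "measure M {\<omega> \<in> space M. fxy (\<rho> * a \<omega>) (\<rho> * b \<omega>) \<le> \<rho> powr (2 * r)}
       \<le> measure M {\<omega> \<in> space M. min (a \<omega>) (b \<omega>)
             \<le> \<rho> powr (2 * r - 1) + \<rho> powr (r - 1) * sqrt (1 + \<rho> powr (2 * r))}"
proof -
  interpret prob_space M by fact
  have m: "{\<omega> \<in> space M. min (a \<omega>) (b \<omega>)
             \<le> \<rho> powr (2 * r - 1) + \<rho> powr (r - 1) * sqrt (1 + \<rho> powr (2 * r))} \<in> sets M"
    using assms(2,3) by measurable
  show ?thesis
    by (rule finite_measure_mono[OF _ m]) (use pointwise assms in auto)
qed

end
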